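(* Let $X,Y$ be compact topological spaces, $\mu\in\mathcal{P}(X)$, $\nu\in\mathcal{P}(Y)$, $c\in C(X\times Y)$. The operator $S$ has a fixed point $u_*\in C(X)$. Moreover, $u_*$ is uniquely determined $\mu$-almost everywhere up to an additive constant; more precisely, there is a unique fixed point of $S$ in $S(C(X))/\mathbb{R}$ (i.e. fixed points in the image of $S$ are unique up to additive constants).
   Context: For $u\in C(X)$ set $v[u](y)=\log\int_Xe^{-c(x,y)-u(x)}d\mu(x)$, and for $v\in C(Y)$ set $u[v](x)=\log\int_Ye^{-c(x,y)-v(y)}d\nu(y)$. $S:C(X)\to C(X)$ is $S(u)=u[v[u]]$. Note $S(u+\lambda)=S(u)+\lambda$ for constants $\lambda$. *)

theory Defs
  imports "HOL-Probability.Probability"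
begin

definition v_of :: "('a \<times> 'b \<Rightarrow> real) \<Rightarrow> 'a measure \<Rightarrow> ('a \<Rightarrow> real) \<Rightarrow> 'b \<Rightarrow> real" where
  "v_of c \<mu> u y = ln (\<integral>x. exp (- c (x, y) - u x) \<partial>\<mu>)"

definition u_of :: "('a \<times> 'b \<Rightarrow> real) \<Rightarrow> 'b measure \<Rightarrow> ('b \<Rightarrow> real) \<Rightarrow> 'a \<Rightarrow> real" where
  "u_of c \<nu> v x = ln (\<integral>y. exp (- c (x, y) - v y) \<partial>\<nu>)"

definition S_op :: "('a \<times> 'b \<Rightarrow> real) \<Rightarrow> 'a measure \<Rightarrow> 'b measure \<Rightarrow> ('a \<Rightarrow> real) \<Rightarrow> 'a \<Rightarrow> real" where
  "S_op c \<mu> \<nu> u = u_of c \<nu> (v_of c \<mu> u)"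

end

theory Submission
  imports Defs
begin



lemma cont_bounded:
  fixes f :: "'a::topological_space \<Rightarrow> real"
  assumes "compact (UNIV :: 'a set)" "continuous_on UNIV f"
  shows "\<exists>B. \<forall>x. \<bar>f x\<bar> \<le> B"
proof -
  have "compact (f ` UNIV)" using assms compact_continuous_image by blast
  then have "bounded (f ` UNIV)" by (rule compact_imp_bounded)
  then show ?thesis unfolding bounded_real by auto
qed

lemma cont_meas:
  assumes "sets M = sets borel" "continuous_on UNIV f"
  shows "f \<in> borel_measurable M"
  using borel_measurable_continuous_onI[OF assms(2)] measurable_cong_sets[OF assms(1) refl] by blast

lemma unif_tube:
  fixes G :: "'x::topological_space \<times> 'p::topological_space \<Rightarrow> real"
  assumes "compact (UNIV :: 'x set)" "continuous_on UNIV G" "e > 0"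
  shows "\<exists>V. open V \<and> p0 \<in> V \<and> (\<forall>p\<in>V. \<forall>x. \<bar>G (x,p) - G (x,p0)\<bar> < e)"
proof -
  let ?W = "{q::'p\<times>'x. \<bar>G (snd q, fst q) - G (snd q, p0)\<bar> < e}"
  have c1: "continuous_on UNIV (\<lambda>q::'p\<times>'x. G (snd q, fst q))"
    by (rule continuous_on_compose2[OF assms(2)]) (auto intro!: continuous_intros)
  have c2: "continuous_on UNIV (\<lambda>q::'p\<times>'x. G (snd q, p0))"
    by (rule continuous_on_compose2[OF assms(2)]) (auto intro!: continuous_intros)
  have "open ?W"
    by (rule open_Collect_less) (auto intro!: continuous_intros c1 c2)
  moreover have "{p0} \<times> UNIV \<subseteq> ?W" using assms(3) by auto
  ultimately have "\<exists>X0. p0 \<in> X0 \<and> open X0 \<and> X0 \<times> UNIV \<subseteq> ?W"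
    by (rule Elementary_Topology.tube_lemma[OF assms(1)])
  then obtain X0 where "p0 \<in> X0" "open X0" "X0 \<times> UNIV \<subseteq> ?W" by blast
  then have "\<forall>p\<in>X0. \<forall>x. (p,x) \<in> ?W" by blast
  then show ?thesis using \<open>p0 \<in> X0\<close> \<open>open X0\<close> by (intro exI[of _ X0]) auto
qed

lemma exp_integrable:
  fixes f :: "'a \<Rightarrow> real"
  assumes "prob_space M" "f \<in> borel_measurable M" "\<forall>x. \<bar>f x\<bar> \<le> B"
  shows "integrable M (\<lambda>x. exp (f x))"
proof -
  interpret prob_space M by fact
  show ?thesis
  proof (rule integrable_const_bound[where B="exp B"])
    show "AE x in M. norm (exp (f x)) \<le> exp B" using assms(3) by (auto intro!: AE_I2 simp: abs_le_iff)
  qed (use assms(2) in auto)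
qed

lemma exp_integral_pos:
  fixes f :: "'a \<Rightarrow> real"
  assumes "prob_space M" "f \<in> borel_measurable M" "\<forall>x. \<bar>f x\<bar> \<le> B"
  shows "(\<integral>x. exp (f x) \<partial>M) \<ge> exp (-B)" "(\<integral>x. exp (f x) \<partial>M) > 0"
proof -
  interpret prob_space M by fact
  have "(\<integral>x. exp (-B) \<partial>M) \<le> (\<integral>x. exp (f x) \<partial>M)"
  proof (rule integral_mono)
    show "integrable M (\<lambda>x. exp (f x))" using exp_integrable assms by blast
    fix x have "-B \<le> f x" using assms(3) by (metis abs_le_iff minus_le_iff)
    then show "exp (-B) \<le> exp (f x)" by simp
  qed simp
  then show "(\<integral>x. exp (f x) \<partial>M) \<ge> exp (-B)" by (simp add: prob_space)
  then show "(\<integral>x. exp (f x) \<partial>M) > 0" using exp_gt_zero less_le_trans by blast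
qed

lemma ln_int_mono:
  fixes f g :: "'a \<Rightarrow> real"
  assumes "prob_space M" "f \<in> borel_measurable M" "\<forall>x. \<bar>f x\<bar> \<le> Bf"
    "g \<in> borel_measurable M" "\<forall>x. \<bar>g x\<bar> \<le> Bg" "\<forall>x. f x \<le> g x + e"
  shows "ln (\<integral>x. exp (f x) \<partial>M) \<le> ln (\<integral>x. exp (g x) \<partial>M) + e"
proof -
  interpret prob_space M by fact
  have pf: "(\<integral>x. exp (f x) \<partial>M) > 0" using exp_integral_pos(2)[OF assms(1-3)] .
  have pg: "(\<integral>x. exp (g x) \<partial>M) > 0" using exp_integral_pos(2)[OF assms(1,4,5)] .
  have "(\<integral>x. exp (f x) \<partial>M) \<le> (\<integral>x. exp e * exp (g x) \<partial>M)"
  proof (rule integral_mono)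
    show "integrable M (\<lambda>x. exp (f x))" using exp_integrable assms(1-3) by blast
    show "integrable M (\<lambda>x. exp e * exp (g x))" using exp_integrable[OF assms(1,4,5)] by simp
    fix x show "exp (f x) \<le> exp e * exp (g x)" using assms(6) by (simp add: exp_add[symmetric] add.commute)
  qed
  also have "\<dots> = exp e * (\<integral>x. exp (g x) \<partial>M)" by simp
  finally have "ln (\<integral>x. exp (f x) \<partial>M) \<le> ln (exp e * (\<integral>x. exp (g x) \<partial>M))"
    using pf by simp
  also have "\<dots> = e + ln (\<integral>x. exp (g x) \<partial>M)" using pg by (simp add: ln_mult)
  finally show ?thesis by simp
qed




lemma contr_core:
  fixes a b h :: "'a \<Rightarrow> real"
  assumes M: "prob_space M"
    and am: "a \<in> borel_measurable M" and bm: "b \<in> borel_measurable M" and hm: "h \<in> borel_measurable M"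
    and ab: "\<forall>x. \<bar>a x\<bar> \<le> Ba" and bb: "\<forall>x. \<bar>b x\<bar> \<le> Bb" and hb: "\<forall>x. \<bar>h x\<bar> \<le> Bh"
    and g1: "\<forall>x. a x - b x \<le> \<Gamma>" and g2: "\<forall>x. b x - a x \<le> \<Gamma>"
    and mM: "\<forall>x. m \<le> h x \<and> h x \<le> M'"
  shows "(ln (\<integral>x. exp (b x - h x) \<partial>M) - ln (\<integral>x. exp (b x) \<partial>M))
       - (ln (\<integral>x. exp (a x - h x) \<partial>M) - ln (\<integral>x. exp (a x) \<partial>M))
       \<le> (1 - exp (-2*\<Gamma>)) * (M' - m)"
proof -
  interpret prob_space M by fact
  have abh: "\<forall>x. \<bar>a x - h x\<bar> \<le> Ba + Bh" using ab hb by (metis abs_triangle_ineq4 add_mono order_trans)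
  have bbh: "\<forall>x. \<bar>b x - h x\<bar> \<le> Bb + Bh" using bb hb by (metis abs_triangle_ineq4 add_mono order_trans)
  have amh: "(\<lambda>x. a x - h x) \<in> borel_measurable M" using am hm by measurable
  have bmh: "(\<lambda>x. b x - h x) \<in> borel_measurable M" using bm hm by measurable
  note ia = exp_integrable[OF M am ab] and ib = exp_integrable[OF M bm bb]
  note iah = exp_integrable[OF M amh abh] and ibh = exp_integrable[OF M bmh bbh]
  define P where "P = (\<integral>x. exp (a x) \<partial>M)"
  define Q where "Q = (\<integral>x. exp (b x) \<partial>M)"
  define Pt where "Pt = (\<integral>x. exp (a x - h x) \<partial>M)"
  define Qt where "Qt = (\<integral>x. exp (b x - h x) \<partial>M)"
  have P0: "P > 0" unfolding P_def using exp_integral_pos(2)[OF M am ab] .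
  have Q0: "Q > 0" unfolding Q_def using exp_integral_pos(2)[OF M bm bb] .
  have Pt0: "Pt > 0" unfolding Pt_def using exp_integral_pos(2)[OF M amh abh] .
  have Qt0: "Qt > 0" unfolding Qt_def using exp_integral_pos(2)[OF M bmh bbh] .
  have G0: "\<Gamma> \<ge> 0" using g1[rule_format, of undefined] g2[rule_format, of undefined] by linarith
  have "0 \<le> (\<integral>x. (exp (a x - h x) - exp (-\<Gamma>) * exp (b x - h x))
                     - (exp (-M') * exp (a x) - exp (-\<Gamma>-M') * exp (b x)) \<partial>M)"
  proof (rule integral_nonneg_AE, rule AE_I2)
    fix x
    have e: "exp (a x - h x) - exp (-\<Gamma>) * exp (b x - h x) - (exp (-M') * exp (a x) - exp (-\<Gamma>-M') * exp (b x))
      = (exp (a x) - exp (-\<Gamma>) * exp (b x)) * (exp (- h x) - exp (-M'))"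
      by (simp add: exp_diff exp_minus field_simps)
    have "exp (-\<Gamma>) * exp (b x) \<le> exp (a x)" using g2[rule_format, of x] by (simp add: exp_add[symmetric] add.commute)
    moreover have "exp (-M') \<le> exp (- h x)" using mM by simp
    ultimately show "0 \<le> exp (a x - h x) - exp (-\<Gamma>) * exp (b x - h x) - (exp (-M') * exp (a x) - exp (-\<Gamma>-M') * exp (b x))"
      unfolding e by simp
  qed
  also have "\<dots> = (Pt - exp (-\<Gamma>) * Qt) - (exp (-M') * P - exp (-\<Gamma>-M') * Q)"
    unfolding P_def Q_def Pt_def Qt_def using ia ib iah ibh by simp
  moreover have "exp (-\<Gamma>-M') = exp (-M') * exp (-\<Gamma>)" by (simp add: exp_add[symmetric])
  ultimately have I1: "Pt \<ge> exp (-\<Gamma>) * Qt + exp (-M') * (P - exp (-\<Gamma>) * Q)"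
    by (simp add: algebra_simps)
  have I2: "P \<le> exp \<Gamma> * Q"
  proof -
    have "P \<le> (\<integral>x. exp \<Gamma> * exp (b x) \<partial>M)" unfolding P_def
    proof (rule integral_mono)
      show "integrable M (\<lambda>x. exp (a x))" by (rule ia)
      show "integrable M (\<lambda>x. exp \<Gamma> * exp (b x))" using ib by simp
      fix x show "exp (a x) \<le> exp \<Gamma> * exp (b x)"
        using g1[rule_format, of x] by (simp add: mult_exp_exp)
    qed
    then show ?thesis unfolding Q_def by simp
  qed
  have I3: "exp (-M') * Q \<le> Qt"
  proof -
    have "(\<integral>x. exp (-M') * exp (b x) \<partial>M) \<le> Qt" unfolding Qt_def
    proof (rule integral_mono)
      show "integrable M (\<lambda>x. exp (-M') * exp (b x))" using ib by simp
      show "integrable M (\<lambda>x. exp (b x - h x))" by (rule ibh)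
      fix x show "exp (-M') * exp (b x) \<le> exp (b x - h x)"
        using mM[rule_format, of x] by (simp add: mult_exp_exp)
    qed
    then show ?thesis unfolding Q_def by simp
  qed
  have I4: "Qt \<le> exp (-m) * Q"
  proof -
    have "Qt \<le> (\<integral>x. exp (-m) * exp (b x) \<partial>M)" unfolding Qt_def
    proof (rule integral_mono)
      show "integrable M (\<lambda>x. exp (-m) * exp (b x))" using ib by simp
      show "integrable M (\<lambda>x. exp (b x - h x))" by (rule ibh)
      fix x show "exp (b x - h x) \<le> exp (-m) * exp (b x)"
        using mM[rule_format, of x] by (simp add: mult_exp_exp)
    qed
    then show ?thesis unfolding Q_def by simp
  qed
  define E' where "E' = Qt / Q"
  define E where "E = Pt / P"
  define \<theta> where "\<theta> = exp (-\<Gamma>) * Q / P"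
  define \<delta> where "\<delta> = exp (-2*\<Gamma>)"
  have d01: "0 < \<delta>" "\<delta> \<le> 1" unfolding \<delta>_def using G0 by auto
  have E'lo: "E' \<ge> exp (-M')" unfolding E'_def using I3 Q0 by (simp add: field_simps)
  have E'hi: "E' \<le> exp (-m)" unfolding E'_def using I4 Q0 by (simp add: field_simps)
  have E'0: "E' > 0" unfolding E'_def using Qt0 Q0 by simp
  have E0: "E > 0" unfolding E_def using Pt0 P0 by simp
  have th: "\<theta> \<ge> \<delta>"
  proof -
    have "exp (-\<Gamma>) * P \<le> Q" using I2 by (simp add: exp_minus field_simps)
    then have "exp (-\<Gamma>) * exp (-\<Gamma>) * P \<le> exp (-\<Gamma>) * Q" by simp
    then show ?thesis unfolding \<theta>_def \<delta>_def using P0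
      by (simp add: field_simps exp_add[symmetric])
  qed
  have EE: "E \<ge> \<theta> * E' + (1 - \<theta>) * exp (-M')"
  proof -
    have "\<theta> * E' + (1 - \<theta>) * exp (-M') = (exp (-\<Gamma>) * Qt + exp (-M') * (P - exp (-\<Gamma>) * Q)) / P"
      unfolding \<theta>_def E'_def using P0 Q0 by (simp add: field_simps)
    also have "\<dots> \<le> Pt / P" using I1 P0 by (simp add: divide_right_mono)
    finally show ?thesis unfolding E_def .
  qed
  have "\<theta> * E' + (1 - \<theta>) * exp (-M') = exp (-M') + \<theta> * (E' - exp (-M'))" by algebra
  moreover have "\<theta> * (E' - exp (-M')) \<ge> \<delta> * (E' - exp (-M'))"
    using th E'lo by (intro mult_right_mono) auto
  ultimately have E2: "E \<ge> (1 - \<delta>) * exp (-M') + \<delta> * E'" using EE by (simp add: algebra_simps)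
  have cv: "exp ((1 - \<delta>) * (-M') + \<delta> * ln E') \<le> (1 - \<delta>) * exp (-M') + \<delta> * exp (ln E')"
    using convex_onD[OF convex_on_exp[of 1], of \<delta> "-M'" "ln E'"] d01 by simp
  have "ln E \<ge> (1 - \<delta>) * (-M') + \<delta> * ln E'"
  proof -
    have "exp ((1 - \<delta>) * (-M') + \<delta> * ln E') \<le> E" using cv E2 E'0 by simp
    then show ?thesis using E0 by (metis ln_exp ln_le_cancel_iff exp_gt_zero)
  qed
  moreover have "ln E' \<le> -m" using E'hi E'0 by (metis ln_exp ln_le_cancel_iff exp_gt_zero)
  moreover have "(1-\<delta>)*(ln E' + M') \<le> (1-\<delta>)*(M' - m)"
    using \<open>ln E' \<le> -m\<close> d01 by (intro mult_left_mono) auto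
  moreover have "ln E' - ((1 - \<delta>) * (-M') + \<delta> * ln E') = (1-\<delta>)*(ln E' + M')" by algebra
  ultimately have "ln E' - ln E \<le> (1 - \<delta>) * (M' - m)" by linarith
  moreover have "ln E' - ln E = (ln Qt - ln Q) - (ln Pt - ln P)"
    unfolding E'_def E_def using P0 Q0 Pt0 Qt0 by (simp add: ln_div)
  ultimately show ?thesis unfolding P_def Q_def Pt_def Qt_def \<delta>_def by simp
qed




lemma lse_lip:
  fixes f1 f2 :: "'a \<Rightarrow> real"
  assumes "prob_space M" "f1 \<in> borel_measurable M" "\<forall>x. \<bar>f1 x\<bar> \<le> Ba"
    "f2 \<in> borel_measurable M" "\<forall>x. \<bar>f2 x\<bar> \<le> Bb" "\<forall>x. \<bar>f1 x - f2 x\<bar> \<le> e"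
  shows "\<bar>ln (\<integral>x. exp (f1 x) \<partial>M) - ln (\<integral>x. exp (f2 x) \<partial>M)\<bar> \<le> e"
proof -
  have h1: "\<forall>x. f1 x \<le> f2 x + e" and h2: "\<forall>x. f2 x \<le> f1 x + e"
    using assms(6) by (auto simp: abs_le_iff) (smt (verit))+
  have "ln (\<integral>x. exp (f1 x) \<partial>M) \<le> ln (\<integral>x. exp (f2 x) \<partial>M) + e"
    by (rule ln_int_mono[OF assms(1-5) h1])
  moreover have "ln (\<integral>x. exp (f2 x) \<partial>M) \<le> ln (\<integral>x. exp (f1 x) \<partial>M) + e"
    by (rule ln_int_mono[OF assms(1,4,5,2,3) h2])
  ultimately show ?thesis by linarith
qed

lemma lse_cont:
  fixes K :: "'q \<Rightarrow> 'p::topological_space \<Rightarrow> real" and f :: "'q \<Rightarrow> real"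
  assumes M: "prob_space M"
    and meas: "\<forall>p. (\<lambda>q. K q p - f q) \<in> borel_measurable M"
    and bnd: "\<forall>p q. \<bar>K q p - f q\<bar> \<le> B"
    and tube: "\<forall>p0 e. e > 0 \<longrightarrow> (\<exists>V. open V \<and> p0 \<in> V \<and> (\<forall>p\<in>V. \<forall>q. \<bar>K q p - K q p0\<bar> < e))"
  shows "continuous_on UNIV (\<lambda>p. ln (\<integral>q. exp (K q p - f q) \<partial>M))"
  unfolding continuous_on_def
proof (intro ballI)
  fix p0 :: 'p
  let ?g = "\<lambda>p. ln (\<integral>q. exp (K q p - f q) \<partial>M)"
  show "(?g \<longlongrightarrow> ?g p0) (at p0 within UNIV)"
    unfolding tendsto_iff
  proof (intro allI impI)
    fix e :: real assume e: "e > 0"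
    obtain V where V: "open V" "p0 \<in> V" "\<forall>p\<in>V. \<forall>q. \<bar>K q p - K q p0\<bar> < e/2"
      using tube e by (meson half_gt_zero)
    have "\<forall>p\<in>V. dist (?g p) (?g p0) < e"
    proof
      fix p assume "p \<in> V"
      have "\<bar>?g p - ?g p0\<bar> \<le> e/2"
        using V(3) \<open>p \<in> V\<close> meas bnd
        by (intro lse_lip[OF M, of _ B _ B]) (auto intro: less_imp_le)
      then show "dist (?g p) (?g p0) < e" using e by (simp add: dist_real_def)
    qed
    then show "\<forall>\<^sub>F p in at p0 within UNIV. dist (?g p) (?g p0) < e"
      unfolding eventually_at_topological using V(1,2) by blast
  qed
qed

lemma contr_T:
  fixes K :: "'q \<Rightarrow> 'p \<Rightarrow> real" and f1 f2 :: "'q \<Rightarrow> real"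
  assumes M: "prob_space M"
    and Km: "\<forall>p. (\<lambda>q. K q p) \<in> borel_measurable M" and Kb: "\<forall>q p. \<bar>K q p\<bar> \<le> C"
    and f1m: "f1 \<in> borel_measurable M" and f1b: "\<forall>q. \<bar>f1 q\<bar> \<le> B1"
    and f2m: "f2 \<in> borel_measurable M" and f2b: "\<forall>q. \<bar>f2 q\<bar> \<le> B2"
    and mM: "\<forall>q. m \<le> f1 q - f2 q \<and> f1 q - f2 q \<le> M'"
  shows "(ln (\<integral>q. exp (K q p - f1 q) \<partial>M) - ln (\<integral>q. exp (K q p - f2 q) \<partial>M))
       - (ln (\<integral>q. exp (K q p' - f1 q) \<partial>M) - ln (\<integral>q. exp (K q p' - f2 q) \<partial>M))
       \<le> (1 - exp (-4*C)) * (M' - m)"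
proof -
  have [measurable]: "(\<lambda>q. K q p') \<in> borel_measurable M" "(\<lambda>q. K q p) \<in> borel_measurable M"
    "f1 \<in> borel_measurable M" "f2 \<in> borel_measurable M" using Km f1m f2m by auto
  have am: "(\<lambda>q. K q p' - f2 q) \<in> borel_measurable M" by measurable
  have bm: "(\<lambda>q. K q p - f2 q) \<in> borel_measurable M" by measurable
  have hm: "(\<lambda>q. f1 q - f2 q) \<in> borel_measurable M" by measurable
  have ab: "\<forall>q. \<bar>K q p' - f2 q\<bar> \<le> C + B2" using Kb f2b by (metis abs_triangle_ineq4 add_mono order_trans)
  have bb: "\<forall>q. \<bar>K q p - f2 q\<bar> \<le> C + B2" using Kb f2b by (metis abs_triangle_ineq4 add_mono order_trans)
  have hb: "\<forall>q. \<bar>f1 q - f2 q\<bar> \<le> B1 + B2" using f1b f2b by (metis abs_triangle_ineq4 add_mono order_trans)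
  have g1: "\<forall>q. (K q p' - f2 q) - (K q p - f2 q) \<le> 2*C"
  proof
    fix q show "(K q p' - f2 q) - (K q p - f2 q) \<le> 2*C"
      using Kb[rule_format, of q p] Kb[rule_format, of q p'] by (simp add: abs_le_iff)
  qed
  have g2: "\<forall>q. (K q p - f2 q) - (K q p' - f2 q) \<le> 2*C"
  proof
    fix q show "(K q p - f2 q) - (K q p' - f2 q) \<le> 2*C"
      using Kb[rule_format, of q p] Kb[rule_format, of q p'] by (simp add: abs_le_iff)
  qed
  have *: "(ln (\<integral>q. exp ((K q p - f2 q) - (f1 q - f2 q)) \<partial>M) - ln (\<integral>q. exp (K q p - f2 q) \<partial>M))
       - (ln (\<integral>q. exp ((K q p' - f2 q) - (f1 q - f2 q)) \<partial>M) - ln (\<integral>q. exp (K q p' - f2 q) \<partial>M))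
       \<le> (1 - exp (-2*(2*C))) * (M' - m)"
    by (rule contr_core[OF M am bm hm ab bb hb g1 g2 mM])
  have e1: "\<And>r. (K q r - f2 q) - (f1 q - f2 q) = K q r - f1 q" for q by simp
  show ?thesis using * unfolding e1 by simp
qed




locale sink =
  fixes \<mu> :: "'a::topological_space measure" and \<nu> :: "'b::topological_space measure"
    and c :: "'a \<times> 'b \<Rightarrow> real"
  assumes cX: "compact (UNIV :: 'a set)" and cY: "compact (UNIV :: 'b set)"
    and pm: "prob_space \<mu>" and sm: "sets \<mu> = sets borel"
    and pn: "prob_space \<nu>" and sn: "sets \<nu> = sets borel"
    and cc: "continuous_on UNIV c"
begin

lemma c_bound: "\<exists>C. \<forall>p. \<bar>c p\<bar> \<le> C"
proof -
  have "compact (UNIV :: ('a \<times> 'b) set)" using compact_Times[OF cX cY] by simp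
  then show ?thesis using cont_bounded[OF _ cc] by blast
qed

definition C where "C = (SOME C. \<forall>p. \<bar>c p\<bar> \<le> C)"

lemma Cb: "\<bar>c p\<bar> \<le> C"
  using someI_ex[OF c_bound] unfolding C_def by blast

lemma C0: "0 \<le> C" using Cb[of undefined] by simp

lemma cx: "continuous_on UNIV (\<lambda>x. c (x,y))"
  by (rule continuous_on_compose2[OF cc]) (auto intro!: continuous_intros)

lemma cy: "continuous_on UNIV (\<lambda>y. c (x,y))"
  by (rule continuous_on_compose2[OF cc]) (auto intro!: continuous_intros)

lemma cswap: "continuous_on UNIV (\<lambda>q::'b\<times>'a. c (snd q, fst q))"
  by (rule continuous_on_compose2[OF cc]) (auto intro!: continuous_intros)

lemma v_eq: "v_of c \<mu> u = (\<lambda>y. ln (\<integral>x. exp ((\<lambda>x y. - c (x,y)) x y - u x) \<partial>\<mu>))"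
  by (rule ext) (simp add: v_of_def)

lemma u_eq: "u_of c \<nu> v = (\<lambda>x. ln (\<integral>y. exp ((\<lambda>y x. - c (x,y)) y x - v y) \<partial>\<nu>))"
  by (rule ext) (simp add: u_of_def)

lemma v_cont:
  assumes u: "continuous_on UNIV u"
  shows "continuous_on UNIV (v_of c \<mu> u)"
proof -
  obtain B where B: "\<forall>x. \<bar>u x\<bar> \<le> B" using cont_bounded[OF cX u] by blast
  show ?thesis unfolding v_eq
  proof (rule lse_cont[OF pm, where B="C+B"])
    show "\<forall>p. (\<lambda>q. - c (q, p) - u q) \<in> borel_measurable \<mu>"
      using cx u by (auto intro!: cont_meas[OF sm] continuous_intros)
    show "\<forall>p q. \<bar>- c (q, p) - u q\<bar> \<le> C + B"
      using Cb B by (metis abs_minus_cancel abs_triangle_ineq4 add_mono order_trans)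
    show "\<forall>p0 e. 0 < e \<longrightarrow> (\<exists>V. open V \<and> p0 \<in> V \<and> (\<forall>p\<in>V. \<forall>q. \<bar>- c (q, p) - - c (q, p0)\<bar> < e))"
      using unif_tube[OF cX cc] by (simp add: abs_minus_commute)
  qed
qed

lemma u_cont:
  assumes v: "continuous_on UNIV v"
  shows "continuous_on UNIV (u_of c \<nu> v)"
proof -
  obtain B where B: "\<forall>x. \<bar>v x\<bar> \<le> B" using cont_bounded[OF cY v] by blast
  show ?thesis unfolding u_eq
  proof (rule lse_cont[OF pn, where B="C+B"])
    show "\<forall>p. (\<lambda>q. - c (p, q) - v q) \<in> borel_measurable \<nu>"
      using cy v by (auto intro!: cont_meas[OF sn] continuous_intros)
    show "\<forall>p q. \<bar>- c (p, q) - v q\<bar> \<le> C + B"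
      using Cb B by (metis abs_minus_cancel abs_triangle_ineq4 add_mono order_trans)
    show "\<forall>p0 e. 0 < e \<longrightarrow> (\<exists>V. open V \<and> p0 \<in> V \<and> (\<forall>p\<in>V. \<forall>q. \<bar>- c (p, q) - - c (p0, q)\<bar> < e))"
      using unif_tube[OF cY cswap] by (simp add: abs_minus_commute)
  qed
qed

lemma S_cont: "continuous_on UNIV u \<Longrightarrow> continuous_on UNIV (S_op c \<mu> \<nu> u)"
  unfolding S_op_def by (intro u_cont v_cont)

lemma u_meas: "continuous_on UNIV u \<Longrightarrow> u \<in> borel_measurable \<mu>"
  by (rule cont_meas[OF sm])

lemma v_meas: "continuous_on UNIV v \<Longrightarrow> v \<in> borel_measurable \<nu>"
  by (rule cont_meas[OF sn])

lemma Km1: "\<forall>p. (\<lambda>q. (\<lambda>x y. - c (x,y)) q p) \<in> borel_measurable \<mu>"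
  using cx by (auto intro!: cont_meas[OF sm] continuous_intros)

lemma Km2: "\<forall>p. (\<lambda>q. (\<lambda>y x. - c (x,y)) q p) \<in> borel_measurable \<nu>"
  using cy by (auto intro!: cont_meas[OF sn] continuous_intros)

lemma Kb1: "\<forall>q p. \<bar>(\<lambda>x y. - c (x,y)) q p\<bar> \<le> C" using Cb by simp
lemma Kb2: "\<forall>q p. \<bar>(\<lambda>y x. - c (x,y)) q p\<bar> \<le> C" using Cb by simp

lemma S_lip:
  assumes u: "continuous_on UNIV u" and u': "continuous_on UNIV u'"
    and e: "\<forall>x. \<bar>u x - u' x\<bar> \<le> e"
  shows "\<bar>S_op c \<mu> \<nu> u x - S_op c \<mu> \<nu> u' x\<bar> \<le> e"
proof -
  obtain B where B: "\<forall>x. \<bar>u x\<bar> \<le> B" using cont_bounded[OF cX u] by blast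
  obtain B' where B': "\<forall>x. \<bar>u' x\<bar> \<le> B'" using cont_bounded[OF cX u'] by blast
  let ?v = "v_of c \<mu> u" and ?v' = "v_of c \<mu> u'"
  have vc: "continuous_on UNIV ?v" "continuous_on UNIV ?v'" using v_cont u u' by auto
  obtain D where D: "\<forall>x. \<bar>?v x\<bar> \<le> D" using cont_bounded[OF cY vc(1)] by blast
  obtain D' where D': "\<forall>x. \<bar>?v' x\<bar> \<le> D'" using cont_bounded[OF cY vc(2)] by blast
  have ve: "\<forall>y. \<bar>?v y - ?v' y\<bar> \<le> e"
  proof
    fix y show "\<bar>?v y - ?v' y\<bar> \<le> e" unfolding v_of_def
    proof (rule lse_lip[OF pm, where Ba="C+B" and Bb="C+B'"])
      show "(\<lambda>x. - c (x, y) - u x) \<in> borel_measurable \<mu>" "(\<lambda>x. - c (x, y) - u' x) \<in> borel_measurable \<mu>"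
        using cx u u' by (auto intro!: cont_meas[OF sm] continuous_intros)
      show "\<forall>x. \<bar>- c (x, y) - u x\<bar> \<le> C + B" "\<forall>x. \<bar>- c (x, y) - u' x\<bar> \<le> C + B'"
        using Cb B B' by (metis abs_minus_cancel abs_triangle_ineq4 add_mono order_trans)+
      show "\<forall>x. \<bar>- c (x, y) - u x - (- c (x, y) - u' x)\<bar> \<le> e" using e by (simp add: abs_minus_commute)
    qed
  qed
  show ?thesis unfolding S_op_def u_of_def
  proof (rule lse_lip[OF pn, where Ba="C+D" and Bb="C+D'"])
    show "(\<lambda>y. - c (x, y) - ?v y) \<in> borel_measurable \<nu>" "(\<lambda>y. - c (x, y) - ?v' y) \<in> borel_measurable \<nu>"
      using cy vc by (auto intro!: cont_meas[OF sn] continuous_intros)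
    show "\<forall>y. \<bar>- c (x, y) - ?v y\<bar> \<le> C + D" "\<forall>y. \<bar>- c (x, y) - ?v' y\<bar> \<le> C + D'"
      using Cb D D' by (metis abs_minus_cancel abs_triangle_ineq4 add_mono order_trans)+
    show "\<forall>y. \<bar>- c (x, y) - ?v y - (- c (x, y) - ?v' y)\<bar> \<le> e" using ve by (simp add: abs_minus_commute)
  qed
qed

definition lam where "lam = 1 - exp (-4*C)"

lemma lam01: "0 \<le> lam" "lam < 1"
  unfolding lam_def using C0 by auto

lemma S_contr:
  assumes u1: "continuous_on UNIV u1" and u2: "continuous_on UNIV u2"
    and K: "\<forall>x x'. (u1 x - u2 x) - (u1 x' - u2 x') \<le> K"
  shows "(S_op c \<mu> \<nu> u1 x - S_op c \<mu> \<nu> u2 x) - (S_op c \<mu> \<nu> u1 x' - S_op c \<mu> \<nu> u2 x') \<le> lam * (lam * K)"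
proof -
  obtain B1 where B1: "\<forall>x. \<bar>u1 x\<bar> \<le> B1" using cont_bounded[OF cX u1] by blast
  obtain B2 where B2: "\<forall>x. \<bar>u2 x\<bar> \<le> B2" using cont_bounded[OF cX u2] by blast
  have hc: "continuous_on UNIV (\<lambda>x. u1 x - u2 x)" using u1 u2 by (intro continuous_intros)
  obtain xa where xa: "\<forall>x. u1 x - u2 x \<le> u1 xa - u2 xa"
    using continuous_attains_sup[OF cX UNIV_not_empty hc] by blast
  have hb: "\<forall>x. (u1 xa - u2 xa - K) \<le> u1 x - u2 x \<and> u1 x - u2 x \<le> u1 xa - u2 xa"
    using xa K by (smt (verit))
  let ?v1 = "v_of c \<mu> u1" and ?v2 = "v_of c \<mu> u2"
  have vc: "continuous_on UNIV ?v1" "continuous_on UNIV ?v2" using v_cont u1 u2 by auto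
  obtain D1 where D1: "\<forall>x. \<bar>?v1 x\<bar> \<le> D1" using cont_bounded[OF cY vc(1)] by blast
  obtain D2 where D2: "\<forall>x. \<bar>?v2 x\<bar> \<le> D2" using cont_bounded[OF cY vc(2)] by blast
  have Dc: "\<forall>y y'. (?v1 y - ?v2 y) - (?v1 y' - ?v2 y') \<le> lam * K"
  proof (intro allI)
    fix y y'
    have "(?v1 y - ?v2 y) - (?v1 y' - ?v2 y') \<le> (1 - exp (-4*C)) * ((u1 xa - u2 xa) - (u1 xa - u2 xa - K))"
      using contr_T[OF pm Km1 Kb1 u_meas[OF u1] B1 u_meas[OF u2] B2 hb, of y y']
      by (simp add: v_of_def)
    then show "(?v1 y - ?v2 y) - (?v1 y' - ?v2 y') \<le> lam * K" unfolding lam_def by simp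
  qed
  have gc: "continuous_on UNIV (\<lambda>y. ?v1 y - ?v2 y)" using vc by (intro continuous_intros)
  obtain ya where ya: "\<forall>y. ?v1 y - ?v2 y \<le> ?v1 ya - ?v2 ya"
    using continuous_attains_sup[OF cY UNIV_not_empty gc] by blast
  have gb: "\<forall>y. (?v1 ya - ?v2 ya - lam * K) \<le> ?v1 y - ?v2 y \<and> ?v1 y - ?v2 y \<le> ?v1 ya - ?v2 ya"
  proof
    fix y show "(?v1 ya - ?v2 ya - lam * K) \<le> ?v1 y - ?v2 y \<and> ?v1 y - ?v2 y \<le> ?v1 ya - ?v2 ya"
      using ya[rule_format, of y] Dc[rule_format, of ya y] by linarith
  qed
  have "(S_op c \<mu> \<nu> u1 x - S_op c \<mu> \<nu> u2 x) - (S_op c \<mu> \<nu> u1 x' - S_op c \<mu> \<nu> u2 x')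
     \<le> (1 - exp (-4*C)) * ((?v1 ya - ?v2 ya) - (?v1 ya - ?v2 ya - lam * K))"
    using contr_T[OF pn Km2 Kb2 v_meas[OF vc(1)] D1 v_meas[OF vc(2)] D2 gb, of x x']
    by (simp add: S_op_def u_of_def)
  then show ?thesis unfolding lam_def by simp
qed

lemma uniq:
  assumes u1: "continuous_on UNIV u1" and u2: "continuous_on UNIV u2"
    and f1: "S_op c \<mu> \<nu> u1 = u1" and f2: "S_op c \<mu> \<nu> u2 = u2"
  shows "\<exists>k. \<forall>x. u1 x = u2 x + k"
proof -
  have hc: "continuous_on UNIV (\<lambda>x. u1 x - u2 x)" using u1 u2 by (intro continuous_intros)
  obtain xa where xa: "\<forall>x. u1 x - u2 x \<le> u1 xa - u2 xa"
    using continuous_attains_sup[OF cX UNIV_not_empty hc] by blast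
  obtain xb where xb: "\<forall>x. u1 xb - u2 xb \<le> u1 x - u2 x"
    using continuous_attains_inf[OF cX UNIV_not_empty hc] by blast
  define K where "K = (u1 xa - u2 xa) - (u1 xb - u2 xb)"
  have K0: "K \<ge> 0" unfolding K_def using xa by auto
  have "\<forall>x x'. (u1 x - u2 x) - (u1 x' - u2 x') \<le> K" unfolding K_def using xa xb by (smt (verit))
  from S_contr[OF u1 u2 this, of xa xb] have "K \<le> lam * (lam * K)" unfolding f1 f2 K_def by simp
  moreover have lk: "lam * K \<le> 1 * K" by (rule mult_right_mono) (use lam01 K0 in auto)
  moreover have "lam * (lam * K) \<le> lam * K" using lam01 lk by (intro mult_left_mono) auto
  ultimately have "K \<le> lam * K" "lam * K \<le> K" by auto
  then have "(1 - lam) * K \<le> 0" by (simp add: left_diff_distrib)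
  then have "K \<le> 0" using lam01 by (simp add: mult_le_0_iff)
  then have "K = 0" using K0 by simp
  have "\<forall>x. u1 x - u2 x = u1 xa - u2 xa"
  proof
    fix x show "u1 x - u2 x = u1 xa - u2 xa"
      using xa[rule_format, of x] xb[rule_format, of x] \<open>K = 0\<close> unfolding K_def by linarith
  qed
  then show ?thesis by (intro exI[of _ "u1 xa - u2 xa"]) (auto simp: algebra_simps)
qed

end



context sink begin

lemma approx:
  assumes F: "continuous_on UNIV (F :: 'a \<times> 'b \<Rightarrow> real)" and e: "e > 0"
  shows "\<exists>g. g \<in> borel_measurable (\<mu> \<Otimes>\<^sub>M \<nu>) \<and> (\<forall>p. \<bar>F p - g p\<bar> < e)"
proof -
  have "\<forall>y0. \<exists>V. open V \<and> y0 \<in> V \<and> (\<forall>y\<in>V. \<forall>x. \<bar>F (x,y) - F (x,y0)\<bar> < e)"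
    using unif_tube[OF cX F e] by blast
  from choice[OF this] obtain V where V: "\<forall>y0. open (V y0) \<and> y0 \<in> V y0 \<and> (\<forall>y\<in>V y0. \<forall>x. \<bar>F (x,y) - F (x,y0)\<bar> < e)"
    by blast
  have Vo: "open (V y0)" "y0 \<in> V y0" for y0 using V by blast+
  have Vb: "\<And>y0 y x. y \<in> V y0 \<Longrightarrow> \<bar>F (x,y) - F (x,y0)\<bar> < e" using V by blast
  obtain D where D: "finite D" "(UNIV::'b set) \<subseteq> (\<Union>y0\<in>D. V y0)"
  proof (rule compactE_image[OF cY, of UNIV V])
    show "open (V T)" for T by (rule Vo)
    show "UNIV \<subseteq> (\<Union>y0\<in>UNIV. V y0)" using Vo(2) by blast
  qed
  obtain N pts where NP: "D = pts ` {i. i < (N::nat)}"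
    using finite_imp_nat_seg_image_inj_on[OF D(1)] by blast
  define J where "J y = (LEAST j. y \<in> V (pts j))" for y
  have Jin: "y \<in> V (pts (J y))" for y
  proof -
    obtain y0 where "y0 \<in> D" "y \<in> V y0" using D(2) by blast
    then obtain j where "y \<in> V (pts j)" using NP by blast
    then show ?thesis unfolding J_def by (rule LeastI)
  qed
  have Jm: "J \<in> measurable \<nu> (count_space UNIV)"
    unfolding J_def
  proof (rule measurable_Least)
    fix i
    have "V (pts i) \<in> sets \<nu>" unfolding sn using Vo(1) by (rule borel_open)
    then show "(\<lambda>y. y \<in> V (pts i)) \<in> measurable \<nu> (count_space UNIV)"
      by (rule pred_sets2) simp
  qed
  have gm: "(\<lambda>p. (\<lambda>j p. F (fst p, pts j)) (J (snd p)) p) \<in> borel_measurable (\<mu> \<Otimes>\<^sub>M \<nu>)"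
  proof (rule measurable_compose_countable)
    fix j
    have "continuous_on UNIV (\<lambda>x. F (x, pts j))"
      by (rule continuous_on_compose2[OF F]) (auto intro!: continuous_intros)
    then have "(\<lambda>x. F (x, pts j)) \<in> borel_measurable \<mu>" by (rule cont_meas[OF sm])
    then show "(\<lambda>p. F (fst p, pts j)) \<in> borel_measurable (\<mu> \<Otimes>\<^sub>M \<nu>)"
      using measurable_compose[OF measurable_fst] by blast
    show "(\<lambda>p. J (snd p)) \<in> measurable (\<mu> \<Otimes>\<^sub>M \<nu>) (count_space UNIV)"
      using measurable_compose[OF measurable_snd Jm] by blast
  qed
  show ?thesis
  proof (intro exI conjI allI)
    show "(\<lambda>p. F (fst p, pts (J (snd p)))) \<in> borel_measurable (\<mu> \<Otimes>\<^sub>M \<nu>)" using gm by simp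
    fix p :: "'a \<times> 'b"
    show "\<bar>F p - F (fst p, pts (J (snd p)))\<bar> < e"
      using Vb[OF Jin[of "snd p"], of "fst p"] by simp
  qed
qed

lemma prod_meas:
  assumes F: "continuous_on UNIV (F :: 'a \<times> 'b \<Rightarrow> real)"
  shows "F \<in> borel_measurable (\<mu> \<Otimes>\<^sub>M \<nu>)"
proof -
  have "\<forall>n. \<exists>g. g \<in> borel_measurable (\<mu> \<Otimes>\<^sub>M \<nu>) \<and> (\<forall>p. \<bar>F p - g p\<bar> < inverse (real (Suc n)))"
    using approx[OF F] by simp
  then obtain g where g: "\<And>n. g n \<in> borel_measurable (\<mu> \<Otimes>\<^sub>M \<nu>)"
    "\<And>n p. \<bar>F p - g n p\<bar> < inverse (real (Suc n))" by metis
  show ?thesis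
  proof (rule borel_measurable_LIMSEQ_real[OF _ g(1)])
    fix p
    have "(\<lambda>n. g n p - F p) \<longlonglongrightarrow> 0"
    proof (rule Lim_null_comparison[OF _ LIMSEQ_inverse_real_of_nat])
      show "\<forall>\<^sub>F n in sequentially. norm (g n p - F p) \<le> inverse (real (Suc n))"
        using g(2) by (intro always_eventually allI) (metis abs_minus_commute less_imp_le real_norm_def)
    qed
    from tendsto_add[OF this tendsto_const[of "F p"]] show "(\<lambda>n. g n p) \<longlonglongrightarrow> F p" by simp
  qed
qed

lemma fubini_cont:
  assumes F: "continuous_on UNIV (F :: 'a \<times> 'b \<Rightarrow> real)"
  shows "(\<integral>y. (\<integral>x. F (x,y) \<partial>\<mu>) \<partial>\<nu>) = (\<integral>x. (\<integral>y. F (x,y) \<partial>\<nu>) \<partial>\<mu>)"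
proof -
  interpret P: pair_prob_space \<mu> \<nu>
    by (intro pair_prob_space.intro pair_sigma_finite.intro prob_space_imp_sigma_finite pm pn)
  have "compact (UNIV :: ('a \<times> 'b) set)" using compact_Times[OF cX cY] by simp
  then obtain B where B: "\<forall>p. \<bar>F p\<bar> \<le> B" using cont_bounded[OF _ F] by blast
  have "integrable (\<mu> \<Otimes>\<^sub>M \<nu>) F"
  proof (rule P.integrable_const_bound[where B=B])
    show "AE p in \<mu> \<Otimes>\<^sub>M \<nu>. norm (F p) \<le> B" by (intro AE_I2) (metis B real_norm_def)
    show "F \<in> borel_measurable (\<mu> \<Otimes>\<^sub>M \<nu>)" by (rule prod_meas[OF F])
  qed
  then have "integrable (\<mu> \<Otimes>\<^sub>M \<nu>) (case_prod (\<lambda>x y. F (x,y)))" by simp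
  then show ?thesis by (rule P.Fubini_integral)
qed

end



context sink begin

lemma exist: "\<exists>u. continuous_on UNIV u \<and> S_op c \<mu> \<nu> u = u"
proof -
  define S where "S = S_op c \<mu> \<nu>"
  define x0 :: 'a where "x0 = undefined"
  define T where "T u = (\<lambda>x. S u x - S u x0)" for u
  define w where "w n = (T ^^ n) (\<lambda>_. 0)" for n
  have wS: "w (Suc n) = T (w n)" for n by (simp add: w_def)
  have w0: "w 0 = (\<lambda>_. 0)" by (simp add: w_def)
  have Tc: "continuous_on UNIV (T u)" if "continuous_on UNIV u" for u
    unfolding T_def S_def using S_cont[OF that] by (intro continuous_intros) auto
  have wc: "continuous_on UNIV (w n)" for n
    by (induction n) (simp_all add: w0 wS Tc)
  have wx0: "w n x0 = 0" for n by (cases n) (simp_all add: w0 wS T_def)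
  have Tcontr: "(T a x - T b x) - (T a x' - T b x') \<le> lam * (lam * K)"
    if "continuous_on UNIV a" "continuous_on UNIV b" "\<forall>x x'. (a x - b x) - (a x' - b x') \<le> K" for a b K x x'
    using S_contr[OF that, of x x'] unfolding T_def S_def by simp
  obtain B1 where B1: "\<forall>x. \<bar>w (Suc 0) x\<bar> \<le> B1" using cont_bounded[OF cX wc[of "Suc 0"]] by blast
  define K0 where "K0 = 2*B1"
  define L where "L = lam*lam"
  have osc: "\<forall>x x'. (w (Suc n) x - w n x) - (w (Suc n) x' - w n x') \<le> L^n * K0" for n
  proof (induction n)
    case 0
    show ?case
    proof (intro allI)
      fix x x'
      show "(w (Suc 0) x - w 0 x) - (w (Suc 0) x' - w 0 x') \<le> L^0 * K0"
        using B1[rule_format, of x] B1[rule_format, of x'] by (simp add: w0 K0_def abs_le_iff)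
    qed
  next
    case (Suc n)
    show ?case
    proof (intro allI)
      fix x x'
      have "(T (w (Suc n)) x - T (w n) x) - (T (w (Suc n)) x' - T (w n) x') \<le> lam * (lam * (L^n * K0))"
        by (rule Tcontr[OF wc wc Suc.IH])
      moreover have "lam * (lam * (L^n * K0)) = L^(Suc n) * K0" by (simp add: L_def algebra_simps)
      ultimately show "(w (Suc (Suc n)) x - w (Suc n) x) - (w (Suc (Suc n)) x' - w (Suc n) x') \<le> L^(Suc n) * K0"
        by (simp only: wS)
    qed
  qed
  have dbound: "\<bar>w (Suc n) x - w n x\<bar> \<le> L^n * K0" for n x
    using osc[of n, rule_format, of x x0] osc[of n, rule_format, of x0 x] wx0[of n] wx0[of "Suc n"]
    by (simp add: abs_le_iff)
  have L01: "0 \<le> L" "L < 1"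
  proof -
    show "0 \<le> L" unfolding L_def using lam01 by simp
    have "lam * lam \<le> lam * 1" using lam01 by (intro mult_left_mono) auto
    then show "L < 1" unfolding L_def using lam01 by simp
  qed
  have summ: "summable (\<lambda>n. L^n * K0)"
    by (rule summable_mult2, rule summable_geometric) (use L01 in simp)
  have ul0: "uniform_limit UNIV (\<lambda>n x. \<Sum>i<n. w (Suc i) x - w i x) (\<lambda>x. \<Sum>i. w (Suc i) x - w i x) sequentially"
    by (rule Weierstrass_m_test[OF _ summ]) (use dbound in simp)
  define W where "W = (\<lambda>x. \<Sum>i. w (Suc i) x - w i x)"
  have tel: "(\<lambda>n x. \<Sum>i<n. w (Suc i) x - w i x) = w"
  proof (intro ext)
    fix n x show "(\<Sum>i<n. w (Suc i) x - w i x) = w n x"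
      using sum_lessThan_telescope[of "\<lambda>i. w i x" n] by (simp add: w0)
  qed
  have ul: "uniform_limit UNIV w W sequentially" using ul0 unfolding tel W_def .
  have Wc: "continuous_on UNIV W"
    by (rule uniform_limit_theorem[OF always_eventually ul]) (auto simp: wc)
  have TW: "T W x = W x" for x
  proof -
    have l1: "(\<lambda>n. w (Suc n) x) \<longlonglongrightarrow> W x"
      using tendsto_uniform_limitI[OF ul, of x] by (intro LIMSEQ_Suc) simp
    have l2: "(\<lambda>n. T (w n) x) \<longlonglongrightarrow> T W x"
      unfolding tendsto_iff
    proof (intro allI impI)
      fix e :: real assume e: "e > 0"
      have "\<forall>\<^sub>F n in sequentially. \<forall>y\<in>UNIV. dist (w n y) (W y) < e/3"
        by (rule uniform_limitD[OF ul]) (use e in simp)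
      then show "\<forall>\<^sub>F n in sequentially. dist (T (w n) x) (T W x) < e"
      proof (rule eventually_mono)
        fix n assume a: "\<forall>y\<in>UNIV. dist (w n y) (W y) < e/3"
        have b: "\<forall>y. \<bar>w n y - W y\<bar> \<le> e/3"
        proof
          fix y show "\<bar>w n y - W y\<bar> \<le> e/3" using a[rule_format, of y] by (simp add: dist_real_def)
        qed
        have c1: "\<bar>S (w n) x - S W x\<bar> \<le> e/3" unfolding S_def by (rule S_lip[OF wc Wc b])
        have c2: "\<bar>S (w n) x0 - S W x0\<bar> \<le> e/3" unfolding S_def by (rule S_lip[OF wc Wc b])
        show "dist (T (w n) x) (T W x) < e" unfolding T_def dist_real_def
        proof -
          have "S (w n) x - S W x \<le> e/3" "S W x - S (w n) x \<le> e/3"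
            "S (w n) x0 - S W x0 \<le> e/3" "S W x0 - S (w n) x0 \<le> e/3"
            using c1 c2 unfolding abs_le_iff by linarith+
          then show "\<bar>S (w n) x - S (w n) x0 - (S W x - S W x0)\<bar> < e"
            unfolding abs_less_iff using e by linarith
        qed
      qed
    qed
    have "T (w n) x = w (Suc n) x" for n by (simp add: wS)
    with l2 have "(\<lambda>n. w (Suc n) x) \<longlonglongrightarrow> T W x" by simp
    then show ?thesis using l1 LIMSEQ_unique by blast
  qed
  define k where "k = S W x0"
  have SW: "S W x = W x + k" for x using TW[of x] unfolding T_def k_def by simp
  define v where "v = v_of c \<mu> W"
  have vc: "continuous_on UNIV v" unfolding v_def by (rule v_cont[OF Wc])
  obtain BW where BW: "\<forall>x. \<bar>W x\<bar> \<le> BW" using cont_bounded[OF cX Wc] by blast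
  obtain Bv where Bv: "\<forall>y. \<bar>v y\<bar> \<le> Bv" using cont_bounded[OF cY vc] by blast
  define F where "F = (\<lambda>p. exp (- c p - W (fst p) - v (snd p)))"
  have Wfc: "continuous_on UNIV (\<lambda>p::'a\<times>'b. W (fst p))"
    by (rule continuous_on_compose2[OF Wc]) (auto intro!: continuous_intros)
  have vsc: "continuous_on UNIV (\<lambda>p::'a\<times>'b. v (snd p))"
    by (rule continuous_on_compose2[OF vc]) (auto intro!: continuous_intros)
  have Fc: "continuous_on UNIV F" unfolding F_def using cc Wfc vsc by (intro continuous_intros)
  have Fy: "(\<integral>x. F (x,y) \<partial>\<mu>) = 1" for y
  proof -
    have m1: "(\<lambda>x. - c (x, y) - W x) \<in> borel_measurable \<mu>"
      using cx Wc by (auto intro!: cont_meas[OF sm] continuous_intros)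
    have b1: "\<forall>x. \<bar>- c (x, y) - W x\<bar> \<le> C + BW"
      using Cb BW by (metis abs_minus_cancel abs_triangle_ineq4 add_mono order_trans)
    have pos: "(\<integral>x. exp (- c (x,y) - W x) \<partial>\<mu>) > 0" by (rule exp_integral_pos(2)[OF pm m1 b1])
    have "(\<integral>x. F (x,y) \<partial>\<mu>) = (\<integral>x. exp (- c (x,y) - W x) * exp (- v y) \<partial>\<mu>)"
      by (simp add: F_def exp_add[symmetric])
    also have "\<dots> = (\<integral>x. exp (- c (x,y) - W x) \<partial>\<mu>) * exp (- v y)" by simp
    also have "(\<integral>x. exp (- c (x,y) - W x) \<partial>\<mu>) = exp (v y)"
      unfolding v_def v_of_def using pos by simp
    finally show ?thesis by (simp add: exp_minus)
  qed
  have Fx: "(\<integral>y. F (x,y) \<partial>\<nu>) = exp k" for x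
  proof -
    have m1: "(\<lambda>y. - c (x, y) - v y) \<in> borel_measurable \<nu>"
      using cy vc by (auto intro!: cont_meas[OF sn] continuous_intros)
    have b1: "\<forall>y. \<bar>- c (x, y) - v y\<bar> \<le> C + Bv"
      using Cb Bv by (metis abs_minus_cancel abs_triangle_ineq4 add_mono order_trans)
    have pos: "(\<integral>y. exp (- c (x,y) - v y) \<partial>\<nu>) > 0" by (rule exp_integral_pos(2)[OF pn m1 b1])
    have "(\<integral>y. F (x,y) \<partial>\<nu>) = (\<integral>y. exp (- c (x,y) - v y) * exp (- W x) \<partial>\<nu>)"
    proof (rule Bochner_Integration.integral_cong[OF refl])
      fix y show "F (x,y) = exp (- c (x,y) - v y) * exp (- W x)"
        unfolding F_def fst_conv snd_conv exp_add[symmetric] by (rule arg_cong[where f=exp]) linarith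
    qed
    also have "\<dots> = (\<integral>y. exp (- c (x,y) - v y) \<partial>\<nu>) * exp (- W x)" by simp
    also have "(\<integral>y. exp (- c (x,y) - v y) \<partial>\<nu>) = exp (S W x)"
      unfolding S_def S_op_def u_of_def v_def[symmetric] using pos by simp
    also have "exp (S W x) * exp (- W x) = exp k" unfolding SW by (simp add: exp_add[symmetric])
    finally show ?thesis .
  qed
  have "(\<integral>y. (\<integral>x. F (x,y) \<partial>\<mu>) \<partial>\<nu>) = (\<integral>x. (\<integral>y. F (x,y) \<partial>\<nu>) \<partial>\<mu>)"
    by (rule fubini_cont[OF Fc])
  then have "1 = exp k"
    using prob_space.prob_space[OF pn] prob_space.prob_space[OF pm] by (simp add: Fy Fx)
  then have "k = 0" by simp
  then have "S W = W" using SW by auto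
  then show ?thesis using Wc unfolding S_def by blast
qed

end


theorem proposition2p7:
  fixes \<mu> :: "'a::topological_space measure" and \<nu> :: "'b::topological_space measure"
    and c :: "'a \<times> 'b \<Rightarrow> real"
  assumes "compact (UNIV :: 'a set)" and "compact (UNIV :: 'b set)"
    and "prob_space \<mu>" and "sets \<mu> = sets borel"
    and "prob_space \<nu>" and "sets \<nu> = sets borel"
    and "continuous_on UNIV c"
  shows "(\<exists>u. continuous_on UNIV u \<and> S_op c \<mu> \<nu> u = u)
    \<and> (\<forall>u1 u2. continuous_on UNIV u1 \<and> continuous_on UNIV u2
          \<and> S_op c \<mu> \<nu> u1 = u1 \<and> S_op c \<mu> \<nu> u2 = u2
          \<longrightarrow> (\<exists>k::real. AE x in \<mu>. u1 x = u2 x + k))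
    \<and> (\<forall>u1 u2. u1 \<in> S_op c \<mu> \<nu> ` {w. continuous_on UNIV w}
          \<and> u2 \<in> S_op c \<mu> \<nu> ` {w. continuous_on UNIV w}
          \<and> S_op c \<mu> \<nu> u1 = u1 \<and> S_op c \<mu> \<nu> u2 = u2
          \<longrightarrow> (\<exists>k::real. \<forall>x. u1 x = u2 x + k))"
proof -
  interpret sink \<mu> \<nu> c by (rule sink.intro[OF assms])
  have P1: "\<exists>u. continuous_on UNIV u \<and> S_op c \<mu> \<nu> u = u" by (rule exist)
  have P2: "\<forall>u1 u2. continuous_on UNIV u1 \<and> continuous_on UNIV u2
          \<and> S_op c \<mu> \<nu> u1 = u1 \<and> S_op c \<mu> \<nu> u2 = u2
          \<longrightarrow> (\<exists>k::real. AE x in \<mu>. u1 x = u2 x + k)"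
  proof (intro allI impI)
    fix u1 u2 :: "'a \<Rightarrow> real"
    assume H: "continuous_on UNIV u1 \<and> continuous_on UNIV u2
          \<and> S_op c \<mu> \<nu> u1 = u1 \<and> S_op c \<mu> \<nu> u2 = u2"
    then obtain k where "\<forall>x. u1 x = u2 x + k" using uniq by blast
    then show "\<exists>k::real. AE x in \<mu>. u1 x = u2 x + k" by (intro exI[of _ k] AE_I2) blast
  qed
  have P3: "\<forall>u1 u2. u1 \<in> S_op c \<mu> \<nu> ` {w. continuous_on UNIV w}
          \<and> u2 \<in> S_op c \<mu> \<nu> ` {w. continuous_on UNIV w}
          \<and> S_op c \<mu> \<nu> u1 = u1 \<and> S_op c \<mu> \<nu> u2 = u2
          \<longrightarrow> (\<exists>k::real. \<forall>x. u1 x = u2 x + k)"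
  proof (intro allI impI)
    fix u1 u2 :: "'a \<Rightarrow> real"
    assume H: "u1 \<in> S_op c \<mu> \<nu> ` {w. continuous_on UNIV w}
          \<and> u2 \<in> S_op c \<mu> \<nu> ` {w. continuous_on UNIV w}
          \<and> S_op c \<mu> \<nu> u1 = u1 \<and> S_op c \<mu> \<nu> u2 = u2"
    have c1: "continuous_on UNIV u1" using H S_cont by blast
    have c2: "continuous_on UNIV u2" using H S_cont by blast
    show "\<exists>k::real. \<forall>x. u1 x = u2 x + k" using uniq[OF c1 c2] H by blast
  qed
  show ?thesis using P1 P2 P3 by blast
qed

end
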